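(* Let $a=1$. Define $\boldsymbol{\alpha}_0=\boldsymbol{\beta}_0=1$ and, for $n\ge1$, \[ \boldsymbol{\alpha}_n(1,k)=(-1)^n q^{-n^2/2}\left(q^{-3n/2}+q^{3n/2}\right),\qquad \boldsymbol{\beta}_n(1,k)=\frac{(-1)^n(1-kq^n+kq^{2n})(k;q)_{n}}{q^{(n^2+3n)/2}(q;q)_n}. \] Then $(\boldsymbol{\alpha}_n(1,k),\boldsymbol{\beta}_n(1,k))$ is a WP-Bailey pair relative to $a=1$.
   Context: Notation: $(x;q)_n=\prod_{i=0}^{n-1}(1-xq^i)$. A pair of sequences $(\boldsymbol{\alpha}_n(a,k,q),\boldsymbol{\beta}_n(a,k,q))_{n\ge0}$ is a WP-Bailey pair (relative to $a$, with parameter $k$) if $\boldsymbol{\alpha}_0=1$ and for all $n\ge0$ \[\boldsymbol{\beta}_n=\sum_{j=0}^n\frac{(k/a;q)_{n-j}(k;q)_{n+j}}{(q;q)_{n-j}(aq;q)_{n+j}}\boldsymbol{\alpha}_j.\] *)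

theory Defs
  imports Complex_Main
begin

definition qpoch :: "'a::comm_ring_1 \<Rightarrow> 'a \<Rightarrow> nat \<Rightarrow> 'a" where
  "qpoch x q n = (\<Prod>i<n. (1 - x * q ^ i))"

definition WP_Bailey_pair ::
  "'a::field \<Rightarrow> 'a \<Rightarrow> 'a \<Rightarrow> (nat \<Rightarrow> 'a) \<Rightarrow> (nat \<Rightarrow> 'a) \<Rightarrow> bool" where
  "WP_Bailey_pair a k q \<alpha> \<beta> \<longleftrightarrow>
     \<alpha> 0 = 1 \<and>
     (\<forall>n. \<beta> n = (\<Sum>j\<le>n. (qpoch (k / a) q (n - j) * qpoch k q (n + j))
                            / (qpoch q q (n - j) * qpoch (a * q) q (n + j)) * \<alpha> j))"

end

theory Submission
  imports Defs "HOL-Computational_Algebra.Polynomial"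
begin

definition Mp :: "'a::field \<Rightarrow> 'a \<Rightarrow> 'a \<Rightarrow> 'a \<Rightarrow> 'a" where
 "Mp q k x y = (k*q*y - k^2*q*y^2 - k^3*(q^3*y^5-q^2*y^4))
     + x*(-q + k*(q^2*y^2-q*y^2) + k^2*(q^2*y^4-q^2*y^3+y^2) + k^3*(q^3*y^5-q*y^4))
     + x^2*((-(q^2*y)+q*y+q) + k*(q^3*y^3-q^2*y^3) - k^2*(q^3*y^4-q*y^3+y^2) - k^3*(q^2*y^5-q*y^4))
     + x^3*(-1+k*y+k^2*(q^2*y^4-q*y^3))"

fun tri :: "nat \<Rightarrow> nat" where
  "tri 0 = 0" | "tri (Suc j) = tri j + j + 2"

definition Aq :: "'a::field \<Rightarrow> nat \<Rightarrow> 'a" where "Aq q j = (-1)^j / q^(tri j)"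
definition al :: "'a::field \<Rightarrow> nat \<Rightarrow> 'a" where
  "al q j = (if j = 0 then 1 else Aq q j * (1 + q^(3*j)))"
definition Tm :: "'a::field \<Rightarrow> 'a \<Rightarrow> nat \<Rightarrow> nat \<Rightarrow> 'a" where
  "Tm q k n j = qpoch k q (n-j) * qpoch k q (n+j) / (qpoch q q (n-j) * qpoch q q (n+j)) * al q j"
definition Hm :: "'a::field \<Rightarrow> 'a \<Rightarrow> nat \<Rightarrow> nat \<Rightarrow> 'a" where
  "Hm q k n j = Mp q k (q^j) (q^n) * qpoch k q (n-j) * qpoch k q (n+j)
      / (qpoch q q (n+1-j) * qpoch q q (n+j)) * Aq q j"
definition Dn :: "'a::field \<Rightarrow> 'a \<Rightarrow> nat \<Rightarrow> 'a" where
  "Dn q k n = (1 - k*q^n + k*q^(2*n)) * q^(n+2) * (1 - q^(n+1))"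
definition Nn :: "'a::field \<Rightarrow> 'a \<Rightarrow> nat \<Rightarrow> 'a" where
  "Nn q k n = - ((1 - k*q^(n+1) + k*q^(2*n+2)) * (1 - k*q^n))"

lemma qpoch_Suc: "qpoch x q (Suc n) = qpoch x q n * (1 - x*q^n)"
  by (simp add: qpoch_def)

lemma qpoch_0[simp]: "qpoch x q 0 = 1"
  by (simp add: qpoch_def)

lemma pnz:
  fixes q :: "'a::field"
  assumes hq: "\<And>i::nat. i \<ge> 1 \<Longrightarrow> q ^ i \<noteq> 1"
  shows "qpoch q q m \<noteq> 0"
proof -
  have "\<And>i. 1 - q * q^i \<noteq> 0" using hq[of "Suc _"] by auto
  then show ?thesis by (simp add: qpoch_def)
qed

lemma Aq_Suc: "q \<noteq> 0 \<Longrightarrow> Aq q (Suc j) = - Aq q j / (q^2 * q^j)"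
  by (simp add: Aq_def power_add field_simps power2_eq_square)

lemma pow3: "(q::'a::monoid_mult)^(3*j) = (q^j)^3"
  using power_mult[of q j 3] by (simp add: mult.commute)

lemma core_ii_poly:
  fixes a X q k :: "'a::field"
  defines "y \<equiv> a*q*X"
  shows "(1-k*y+k*y^2)*(q^2*y)*(1-q*y)*((1-k*a)*(1-k*q*a)*(1-k*a*q*X^2)*(1+X^3))*(q^2*X)
     + (1-k*q*y+k*q^2*y^2)*(1-k*y)*((1-k*a)*(1-q^2*a)*(1-a*q^2*X^2)*(1+X^3))*(q^2*X)
   = - Mp q k (q*X) y*(1-k*a*q*X^2)*(1-q^2*a) - Mp q k X y*(1-k*a)*(1-a*q^2*X^2)*(q^2*X)"
  unfolding y_def Mp_def by algebra

lemma step_ii: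
  fixes q k :: "'a::field"
  assumes q0: "q \<noteq> 0" and hq: "\<And>i::nat. i \<ge> 1 \<Longrightarrow> q ^ i \<noteq> 1"
    and j1: "1 \<le> j" and nj: "n = m + 1 + j"
  shows "Dn q k n * Tm q k (Suc n) j - Nn q k n * Tm q k n j = Hm q k n (Suc j) - Hm q k n j"
proof -
  define a where "a = q^m"
  define X where "X = q^j"
  define y where "y = a*q*X"
  define E0 where "E0 = qpoch k q m"
  define E1 where "E1 = qpoch k q (n+j)"
  define P0 where "P0 = qpoch q q (Suc m)"
  define P1 where "P1 = qpoch q q (n+j)"
  define Aj where "Aj = Aq q j"
  define d1 where "d1 = 1-q^2*a"
  define d2 where "d2 = 1-a*q^2*X^2"
  define C where "C = E0*E1*Aj/(P0*P1*d1*d2)"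
  have i1: "n - j = Suc m" "Suc n - j = Suc (Suc m)" "Suc n + j = Suc (n+j)" "n - Suc j = m"
    "n + Suc j = Suc (n+j)" "n + 1 - Suc j = Suc m" "n + 1 - j = Suc (Suc m)" using nj by auto
  have pw: "q^n = y" "q^(n+j) = a*q*X^2" "q^(Suc m) = q*a"
    unfolding y_def a_def X_def nj by (simp_all add: power_add power2_eq_square)
  have e: "qpoch k q (Suc m) = E0*(1-k*a)" "qpoch k q (Suc (Suc m)) = E0*(1-k*a)*(1-k*q*a)"
    "qpoch k q (Suc (n+j)) = E1*(1-k*a*q*X^2)" "qpoch q q (Suc (Suc m)) = P0*d1"
    "qpoch q q (Suc(n+j)) = P1*d2"
    unfolding E0_def E1_def P0_def P1_def d1_def d2_def using pw
    by (simp_all add: qpoch_Suc a_def power2_eq_square mult_ac)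
  have nz: "P0 \<noteq> 0" "P1 \<noteq> 0" "d1 \<noteq> 0" "d2 \<noteq> 0" "X \<noteq> 0"
  proof -
    show "P0 \<noteq> 0" "P1 \<noteq> 0" unfolding P0_def P1_def using pnz[OF hq] by auto
    have "q^(Suc (Suc m)) \<noteq> 1" by (rule hq) simp
    then show "d1 \<noteq> 0" unfolding d1_def by (simp add: a_def power2_eq_square mult.assoc)
    have "q^(Suc (n+j)) \<noteq> 1" by (rule hq) simp
    then show "d2 \<noteq> 0" unfolding d2_def using pw by (simp add: power2_eq_square mult_ac)
    show "X \<noteq> 0" using q0 by (simp add: X_def)
  qed
  have alj: "al q j = Aj*(1+X^3)" using j1 by (simp add: al_def Aj_def X_def pow3)
  have A1: "Aq q (Suc j) = - Aj/(q^2*X)" using q0 by (simp add: Aq_Suc Aj_def X_def)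
  have Dn: "Dn q k n = (1-k*y+k*y^2)*(q^2*y)*(1-q*y)"
    using pw by (simp add: Dn_def power_add power_mult mult.commute[of 2] power2_eq_square mult_ac)
  have Nn: "Nn q k n = - ((1-k*q*y+k*q^2*y^2)*(1-k*y))"
    using pw by (simp add: Nn_def power_add power_mult mult.commute[of 2] power2_eq_square mult_ac)
  note fold = E0_def[symmetric] E1_def[symmetric] P0_def[symmetric] P1_def[symmetric] Aj_def[symmetric]
    X_def[symmetric]
  have T1: "Tm q k (Suc n) j = C * ((1-k*a)*(1-k*q*a)*(1-k*a*q*X^2)*(1+X^3))"
    unfolding Tm_def i1 e alj unfolding fold C_def using nz q0 by (simp add: field_simps)
  have T0: "Tm q k n j = C*((1-k*a)*d1*d2*(1+X^3))"
    unfolding Tm_def i1 e alj unfolding fold C_def using nz q0 by (simp add: field_simps)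
  have H1: "Hm q k n (Suc j) = C*(Mp q k (q*X) y*(1-k*a*q*X^2)*d1) * (-1/(q^2*X))"
    unfolding Hm_def i1 e A1 pw(1) power_Suc unfolding fold C_def using nz q0 by (simp add: field_simps)
  have H0: "Hm q k n j = C*(Mp q k X y*(1-k*a)*d2)"
    unfolding Hm_def i1 e pw(1) unfolding fold C_def using nz q0 by (simp add: field_simps)
  have core: "(1-k*y+k*y^2)*(q^2*y)*(1-q*y)*((1-k*a)*(1-k*q*a)*(1-k*a*q*X^2)*(1+X^3))*(q^2*X)
     + (1-k*q*y+k*q^2*y^2)*(1-k*y)*((1-k*a)*(1-q^2*a)*(1-a*q^2*X^2)*(1+X^3))*(q^2*X)
   = - Mp q k (q*X) y*(1-k*a*q*X^2)*(1-q^2*a) - Mp q k X y*(1-k*a)*(1-a*q^2*X^2)*(q^2*X)"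
    unfolding y_def by (rule core_ii_poly)
  have "Dn q k n * Tm q k (Suc n) j - Nn q k n * Tm q k n j
     = C/(q^2*X) * ((1-k*y+k*y^2)*(q^2*y)*(1-q*y)*((1-k*a)*(1-k*q*a)*(1-k*a*q*X^2)*(1+X^3))*(q^2*X)
     + (1-k*q*y+k*q^2*y^2)*(1-k*y)*((1-k*a)*d1*d2*(1+X^3))*(q^2*X))"
    unfolding Dn Nn T1 T0 using nz q0 by (simp add: field_simps)
  also have "\<dots> = C/(q^2*X) * (- Mp q k (q*X) y*(1-k*a*q*X^2)*d1 - Mp q k X y*(1-k*a)*d2*(q^2*X))"
    unfolding d1_def d2_def by (simp only: core)
  also have "\<dots> = Hm q k n (Suc j) - Hm q k n j"
    unfolding H1 H0 using nz q0 by (simp add: field_simps)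
  finally show ?thesis .
qed

lemma core_i_poly:
  fixes a q k :: "'a::field"
  defines "y \<equiv> q*a"
  shows "((1-k*y+k*y^2)*(q^2*y)*(1-q*y)*(1-k*a)^2*(1-k*q*a)^2 + (1-k*q*y+k*q^2*y^2)*(1-k*y)*(1-k*a)^2*(1-q^2*a)^2)*q^2
     = - Mp q k q y*(1-k*a)*(1-k*q*a)*(1-q^2*a)"
  unfolding y_def Mp_def by algebra

lemma core_iii_poly:
  fixes X q k :: "'a::field"
  shows "(1-k*X+k*X^2)*(q^2*X)*(1-q*X)*((1-k)*(1-k*X^2)*(1+X^3)*(1-q^2*X^2)*(q^2*X)
           - (1-k*X^2)*(1-k*q*X^2)*(1-q)*(1+q^3*X^3))
       + (1-k*q*X+k*q^2*X^2)*(1-k*X)*(1+X^3)*(1-q)*(1-q*X^2)*(1-q^2*X^2)*(q^2*X)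
     = - Mp q k X X*(1-q*X^2)*(1-q^2*X^2)*(q^2*X)"
  unfolding Mp_def by algebra

lemma step_i:
  fixes q k :: "'a::field"
  assumes q0: "q \<noteq> 0" and hq: "\<And>i::nat. i \<ge> 1 \<Longrightarrow> q ^ i \<noteq> 1"
    and nm: "n = Suc m"
  shows "Dn q k n * Tm q k (Suc n) 0 - Nn q k n * Tm q k n 0 = Hm q k n 1"
proof -
  define a where "a = q^m"
  define y where "y = q*a"
  define E0 where "E0 = qpoch k q m"
  define P0 where "P0 = qpoch q q (Suc m)"
  define d1 where "d1 = 1-q^2*a"
  define C where "C = E0^2/(P0^2*d1^2)"
  have pw: "q^n = y" unfolding y_def a_def nm by simp
  have e: "qpoch k q n = E0*(1-k*a)" "qpoch k q (Suc n) = E0*(1-k*a)*(1-k*q*a)"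
    "qpoch q q (Suc n) = P0*d1" "qpoch q q n = P0" "qpoch k q (n-1) = E0"
    unfolding E0_def P0_def d1_def nm a_def
    by (simp_all add: qpoch_Suc power2_eq_square mult_ac)
  have nz: "P0 \<noteq> 0" "d1 \<noteq> 0"
  proof -
    show "P0 \<noteq> 0" unfolding P0_def using pnz[OF hq] by auto
    have "q^(Suc (Suc m)) \<noteq> 1" by (rule hq) simp
    then show "d1 \<noteq> 0" unfolding d1_def by (simp add: a_def power2_eq_square mult.assoc)
  qed
  have A1: "Aq q 1 = - 1/q^2" by (simp add: Aq_def numeral_2_eq_2)
  have Dn: "Dn q k n = (1-k*y+k*y^2)*(q^2*y)*(1-q*y)"
    using pw by (simp add: Dn_def power_add power_mult mult.commute[of 2] power2_eq_square mult_ac)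
  have Nn: "Nn q k n = - ((1-k*q*y+k*q^2*y^2)*(1-k*y))"
    using pw by (simp add: Nn_def power_add power_mult mult.commute[of 2] power2_eq_square mult_ac)
  have idx: "n - 0 = n" "n + 0 = n" "Suc n - 0 = Suc n" "Suc n + 0 = Suc n" "n - 1 = m" "n + 1 = Suc n"
    "n + 1 - 1 = n" "Suc n - 1 = n" using nm by auto
  have T1: "Tm q k (Suc n) 0 = C * ((1-k*a)^2*(1-k*q*a)^2)"
    unfolding Tm_def al_def idx using nz apply (simp add: e C_def field_simps) by algebra
  have T0: "Tm q k n 0 = C * ((1-k*a)^2*d1^2)"
    unfolding Tm_def al_def idx using nz apply (simp add: e C_def field_simps) by algebra
  have e5: "qpoch k q m = E0" unfolding E0_def ..
  have H1: "Hm q k n 1 = C * (Mp q k q y*(1-k*a)*(1-k*q*a)*d1) * (-1/q^2)"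
    unfolding Hm_def A1 idx power_one_right pw e e5 using nz q0 apply (simp add: C_def field_simps) by algebra
  have core: "((1-k*y+k*y^2)*(q^2*y)*(1-q*y)*(1-k*a)^2*(1-k*q*a)^2 + (1-k*q*y+k*q^2*y^2)*(1-k*y)*(1-k*a)^2*d1^2)*q^2
     = - Mp q k q y*(1-k*a)*(1-k*q*a)*d1"
    unfolding y_def d1_def by (rule core_i_poly)
  have "Dn q k n * Tm q k (Suc n) 0 - Nn q k n * Tm q k n 0
     = C/q^2 * (((1-k*y+k*y^2)*(q^2*y)*(1-q*y)*(1-k*a)^2*(1-k*q*a)^2 + (1-k*q*y+k*q^2*y^2)*(1-k*y)*(1-k*a)^2*d1^2)*q^2)"
    unfolding Dn Nn T1 T0 using q0 by (simp add: field_simps)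
  also have "\<dots> = C/q^2 * (- Mp q k q y*(1-k*a)*(1-k*q*a)*d1)" by (simp only: core)
  also have "\<dots> = Hm q k n 1" unfolding H1 using q0 by (simp add: field_simps)
  finally show ?thesis .
qed

lemma step_iii:
  fixes q k :: "'a::field"
  assumes q0: "q \<noteq> 0" and hq: "\<And>i::nat. i \<ge> 1 \<Longrightarrow> q ^ i \<noteq> 1"
    and n1: "1 \<le> n"
  shows "Dn q k n * (Tm q k (Suc n) n + Tm q k (Suc n) (Suc n)) - Nn q k n * Tm q k n n = - Hm q k n n"
proof -
  define X where "X = q^n"
  define E where "E = qpoch k q (n+n)"
  define P where "P = qpoch q q (n+n)"
  define Aj where "Aj = Aq q n"
  define d0 where "d0 = 1-q"
  define d3 where "d3 = 1-q*X^2"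
  define d4 where "d4 = 1-q^2*X^2"
  define C where "C = E*Aj/(P*d0*d3*d4)"
  have pw: "q^(n+n) = X^2" unfolding X_def by (simp add: power_add power2_eq_square)
  have i1: "Suc n - n = 1" "Suc n + n = Suc (n+n)" "Suc n - Suc n = 0" "Suc n + Suc n = Suc (Suc (n+n))"
     "n - n = 0" "n + 1 - n = 1" by auto
  have e: "qpoch k q 1 = 1-k" "qpoch q q 1 = d0" "qpoch k q (Suc (n+n)) = E*(1-k*X^2)"
    "qpoch k q (Suc (Suc (n+n))) = E*(1-k*X^2)*(1-k*q*X^2)"
    "qpoch q q (Suc (n+n)) = P*d3" "qpoch q q (Suc (Suc (n+n))) = P*d3*d4"
    unfolding E_def P_def d0_def d3_def d4_def using pw
    by (simp_all add: qpoch_Suc qpoch_def power2_eq_square mult_ac)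
  have nz: "P \<noteq> 0" "d0 \<noteq> 0" "d3 \<noteq> 0" "d4 \<noteq> 0" "X \<noteq> 0"
  proof -
    show "P \<noteq> 0" unfolding P_def using pnz[OF hq] by auto
    show "d0 \<noteq> 0" unfolding d0_def using hq[of 1] by auto
    have "q^(Suc (n+n)) \<noteq> 1" by (rule hq) simp
    then show "d3 \<noteq> 0" unfolding d3_def using pw by simp
    have "q^(Suc (Suc (n+n))) \<noteq> 1" by (rule hq) simp
    then show "d4 \<noteq> 0" unfolding d4_def using pw by (simp add: power2_eq_square mult.assoc)
    show "X \<noteq> 0" using q0 by (simp add: X_def)
  qed
  have aln: "al q n = Aj*(1+X^3)" using n1 by (simp add: al_def Aj_def X_def pow3)
  have alSn: "al q (Suc n) = - Aj/(q^2*X)*(1+q^3*X^3)"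
  proof -
    have "q^(3 * Suc n) = q^3*X^3" unfolding X_def pow3[symmetric] by (simp add: power_add)
    then show ?thesis using q0 by (simp add: al_def Aq_Suc Aj_def X_def)
  qed
  have Dn: "Dn q k n = (1-k*X+k*X^2)*(q^2*X)*(1-q*X)"
    by (simp add: Dn_def X_def power_add power_mult mult.commute[of 2] power2_eq_square mult_ac)
  have Nn: "Nn q k n = - ((1-k*q*X+k*q^2*X^2)*(1-k*X))"
    by (simp add: Nn_def X_def power_add power_mult mult.commute[of 2] power2_eq_square mult_ac)
  note fold = E_def[symmetric] P_def[symmetric] Aj_def[symmetric] X_def[symmetric]
  have T1a: "Tm q k (Suc n) n = C * ((1-k)*(1-k*X^2)*(1+X^3)*d4)"
    unfolding Tm_def i1 e aln unfolding fold C_def using nz q0 by (simp add: field_simps)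
  have T1b: "Tm q k (Suc n) (Suc n) = C * ((1-k*X^2)*(1-k*q*X^2)*d0*(1+q^3*X^3)) * (-1/(q^2*X))"
    unfolding Tm_def i1 e alSn unfolding fold C_def using nz q0 by (simp add: field_simps)
  have T0: "Tm q k n n = C * ((1+X^3)*d0*d3*d4)"
    unfolding Tm_def i1 e aln unfolding fold C_def using nz q0 by (simp add: field_simps)
  have H: "Hm q k n n = C * (Mp q k X X * d3*d4)"
    unfolding Hm_def i1 e unfolding fold C_def using nz q0 by (simp add: field_simps)
  have core: "(1-k*X+k*X^2)*(q^2*X)*(1-q*X)*((1-k)*(1-k*X^2)*(1+X^3)*d4*(q^2*X)
           - (1-k*X^2)*(1-k*q*X^2)*d0*(1+q^3*X^3))
       + (1-k*q*X+k*q^2*X^2)*(1-k*X)*(1+X^3)*d0*d3*d4*(q^2*X)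
     = - Mp q k X X*d3*d4*(q^2*X)"
    unfolding d0_def d3_def d4_def by (rule core_iii_poly)
  have "Dn q k n * (Tm q k (Suc n) n + Tm q k (Suc n) (Suc n)) - Nn q k n * Tm q k n n
     = C/(q^2*X) * ((1-k*X+k*X^2)*(q^2*X)*(1-q*X)*((1-k)*(1-k*X^2)*(1+X^3)*d4*(q^2*X)
           - (1-k*X^2)*(1-k*q*X^2)*d0*(1+q^3*X^3))
       + (1-k*q*X+k*q^2*X^2)*(1-k*X)*(1+X^3)*d0*d3*d4*(q^2*X))"
    unfolding Dn Nn T1a T1b T0 using nz q0 by (simp add: field_simps)
  also have "\<dots> = C/(q^2*X) * (- Mp q k X X*d3*d4*(q^2*X))" by (simp only: core)
  also have "\<dots> = - Hm q k n n" unfolding H using nz q0 by (simp add: field_simps)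
  finally show ?thesis .
qed

definition be :: "'a::field \<Rightarrow> 'a \<Rightarrow> nat \<Rightarrow> 'a" where
  "be q k n = (if n = 0 then 1 else (-1)^n*(1 - k*q^n + k*q^(2*n))*qpoch k q n/(q^(tri n)*qpoch q q n))"

lemma tele:
  fixes q k :: "'a::field"
  assumes q0: "q \<noteq> 0" and hq: "\<And>i::nat. i \<ge> 1 \<Longrightarrow> q ^ i \<noteq> 1"
    and n1: "1 \<le> n"
  shows "Dn q k n * (\<Sum>j\<le>Suc n. Tm q k (Suc n) j) = Nn q k n * (\<Sum>j\<le>n. Tm q k n j)"
proof -
  let ?f = "\<lambda>j. Dn q k n * Tm q k (Suc n) j - Nn q k n * Tm q k n j"
  have part: "1 \<le> r \<Longrightarrow> r \<le> n \<Longrightarrow> (\<Sum>j<r. ?f j) = Hm q k n r" for r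
  proof (induction r)
    case 0 then show ?case by simp
  next
    case (Suc r)
    show ?case
    proof (cases "r = 0")
      case True
      have "n = Suc (n - 1)" using n1 by simp
      from step_i[OF q0 hq this] show ?thesis using True by simp
    next
      case False
      then have IH: "(\<Sum>j<r. ?f j) = Hm q k n r" using Suc by simp
      have "n = (n - r - 1) + 1 + r" using Suc by simp
      from step_ii[OF q0 hq _ this] False
      have "?f r = Hm q k n (Suc r) - Hm q k n r" by simp
      then show ?thesis using IH by simp
    qed
  qed
  have "Dn q k n * (\<Sum>j\<le>Suc n. Tm q k (Suc n) j) - Nn q k n * (\<Sum>j\<le>n. Tm q k n j)
     = (\<Sum>j<n. ?f j) + (Dn q k n * (Tm q k (Suc n) n + Tm q k (Suc n) (Suc n)) - Nn q k n * Tm q k n n)"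
    by (simp add: lessThan_Suc_atMost[symmetric] sum_distrib_left sum_subtractf algebra_simps)
  also have "\<dots> = 0" using part[OF n1 order_refl] step_iii[OF q0 hq n1] by simp
  finally show ?thesis by simp
qed

lemma be_rec:
  fixes q k :: "'a::field"
  assumes q0: "q \<noteq> 0" and hq: "\<And>i::nat. i \<ge> 1 \<Longrightarrow> q ^ i \<noteq> 1"
    and n1: "1 \<le> n"
  shows "Dn q k n * be q k (Suc n) = Nn q k n * be q k n"
proof -
  define y where "y = q^n"
  define E where "E = qpoch k q n"
  define P where "P = qpoch q q n"
  define Tq where "Tq = q^(tri n)"
  define d where "d = 1 - q*y"
  have nz: "P \<noteq> 0" "d \<noteq> 0" "Tq \<noteq> 0" "y \<noteq> 0"
  proof -
    show "P \<noteq> 0" unfolding P_def using pnz[OF hq] by auto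
    have "q^(Suc n) \<noteq> 1" by (rule hq) simp
    then show "d \<noteq> 0" unfolding d_def y_def by simp
    show "Tq \<noteq> 0" "y \<noteq> 0" using q0 by (simp_all add: Tq_def y_def)
  qed
  have pw: "q^(2*n) = y^2" "q^(2*Suc n) = q^2*y^2" "q^(Suc n) = q*y"
     "q^(tri (Suc n)) = Tq*y*q^2"
    by (simp_all add: y_def Tq_def power_add power_mult mult.commute[of 2] power_mult_distrib power2_eq_square mult_ac)
  have e: "qpoch k q (Suc n) = E*(1-k*y)" "qpoch q q (Suc n) = P*d"
    unfolding E_def P_def d_def y_def by (simp_all add: qpoch_Suc)
  have Dn: "Dn q k n = (1-k*y+k*y^2)*(q^2*y)*(1-q*y)"
    by (simp add: Dn_def y_def power_add power_mult mult.commute[of 2] power2_eq_square mult_ac)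
  have Nn: "Nn q k n = - ((1-k*q*y+k*q^2*y^2)*(1-k*y))"
    by (simp add: Nn_def y_def power_add power_mult mult.commute[of 2] power2_eq_square mult_ac)
  have b1: "be q k (Suc n) = (-1)^(Suc n)*(1 - k*(q*y) + k*(q^2*y^2))*(E*(1-k*y))/((Tq*y*q^2)*(P*d))"
    unfolding be_def pw e by (rule if_not_P) simp
  have b0: "be q k n = (-1)^n*(1 - k*y + k*y^2)*E/(Tq*P)"
    unfolding be_def using n1 pw by (simp add: E_def P_def Tq_def y_def)
  show ?thesis unfolding Dn Nn b1 b0 d_def[symmetric] using nz q0
    by (simp add: field_simps)
qed

lemma base1:
  fixes q k :: "'a::field"
  assumes q0: "q \<noteq> 0" and hq: "\<And>i::nat. i \<ge> 1 \<Longrightarrow> q ^ i \<noteq> 1"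
  shows "(\<Sum>j\<le>1. Tm q k 1 j) = be q k 1"
proof -
  have a: "1 - q \<noteq> 0" using hq[of 1] by auto
  have b: "1 - q*q \<noteq> 0" using hq[of 2] by (auto simp: power2_eq_square)
  have p1: "qpoch x q 1 = 1 - x" "qpoch x q (Suc 0) = 1 - x" for x by (simp_all add: qpoch_def)
  have p2: "qpoch x q 2 = (1-x)*(1-x*q)" "qpoch x q (Suc (Suc 0)) = (1-x)*(1-x*q)" for x
    by (simp_all add: qpoch_def numeral_2_eq_2)
  have t1: "tri 1 = 2" by (simp add: numeral_2_eq_2)
  have s: "(\<Sum>j\<le>1. Tm q k 1 j) = Tm q k 1 0 + Tm q k 1 1" by simp
  have T0: "Tm q k 1 0 = (1-k)*(1-k)/((1-q)*(1-q))" by (simp add: Tm_def al_def p1)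
  have T1: "Tm q k 1 1 = -((1-k)*(1-k*q)*(1+q^3)/((1-q)*(1-q*q)*(q*q)))"
    by (simp add: Tm_def al_def Aq_def t1 p2 one_add_one[symmetric])
  have B: "be q k 1 = -(1 - k*q + k*q^2)*(1-k)/(q^2*(1-q))" by (simp add: be_def t1 p1 power2_eq_square)
  define u where "u = 1 - q"
  define v where "v = 1 - q*q"
  have uv: "1 - q = u" "1 - q*q = v" "u \<noteq> 0" "v \<noteq> 0" using a b by (simp_all add: u_def v_def)
  have num: "(1-k)*(1-k)*(q*q)*v - (1-k)*(1-k*q)*(1+q^3)*u = -(1 - k*q + k*q^2)*(1-k)*u*v"
    unfolding u_def v_def by algebra
  have "(1-k)*(1-k)/(u*u) + -((1-k)*(1-k*q)*(1+q^3)/(u*v*(q*q)))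
      = ((1-k)*(1-k)*(q*q)*v - (1-k)*(1-k*q)*(1+q^3)*u)/(u*u*v*(q*q))"
    using uv q0 by (simp add: field_simps)
  also have "\<dots> = -(1 - k*q + k*q^2)*(1-k)*u*v/(u*u*v*(q*q))" by (simp only: num)
  also have "\<dots> = -(1 - k*q + k*q^2)*(1-k)/(q^2*u)"
    using uv q0 by (simp add: field_simps power2_eq_square)
  finally have "(1-k)*(1-k)/(u*u) + -((1-k)*(1-k*q)*(1+q^3)/(u*v*(q*q))) = -(1 - k*q + k*q^2)*(1-k)/(q^2*u)" .
  then show ?thesis unfolding s T0 T1 B uv(1,2) .
qed

definition polyfun :: "('a::field \<Rightarrow> 'a) \<Rightarrow> bool" where
  "polyfun f \<longleftrightarrow> (\<exists>p. \<forall>x. f x = poly p x)"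

lemma pf_const: "polyfun (\<lambda>x. c)"
  unfolding polyfun_def by (rule exI[of _ "[:c:]"]) simp
lemma pf_id: "polyfun (\<lambda>x. x)"
  unfolding polyfun_def by (rule exI[of _ "[:0,1:]"]) simp
lemma pf_add: "polyfun f \<Longrightarrow> polyfun g \<Longrightarrow> polyfun (\<lambda>x. f x + g x)"
  unfolding polyfun_def by (metis poly_add)
lemma pf_diff: "polyfun f \<Longrightarrow> polyfun g \<Longrightarrow> polyfun (\<lambda>x. f x - g x)"
  unfolding polyfun_def by (metis poly_diff)
lemma pf_mult: "polyfun f \<Longrightarrow> polyfun g \<Longrightarrow> polyfun (\<lambda>x. f x * g x)"
  unfolding polyfun_def by (metis poly_mult)
lemma pf_div: "polyfun f \<Longrightarrow> polyfun (\<lambda>x. f x / c)"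
proof -
  assume "polyfun f"
  then have "polyfun (\<lambda>x. f x * inverse c)" by (intro pf_mult pf_const)
  then show ?thesis by (simp add: divide_inverse)
qed
lemma pf_prod: "finite A \<Longrightarrow> (\<And>i. i \<in> A \<Longrightarrow> polyfun (f i)) \<Longrightarrow> polyfun (\<lambda>x. \<Prod>i\<in>A. f i x)"
  by (induction A rule: finite_induct) (auto intro: pf_const pf_mult)
lemma pf_sum: "finite A \<Longrightarrow> (\<And>i. i \<in> A \<Longrightarrow> polyfun (f i)) \<Longrightarrow> polyfun (\<lambda>x. \<Sum>i\<in>A. f i x)"
  by (induction A rule: finite_induct) (auto intro: pf_const pf_add)
lemma pf_qpoch: "polyfun (\<lambda>k. qpoch k q m)"
  unfolding qpoch_def by (intro pf_prod pf_diff pf_mult pf_const pf_id) simp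

lemma pf_zero:
  fixes f :: "'a::field \<Rightarrow> 'a"
  assumes inf: "infinite (UNIV :: 'a set)" and pf: "polyfun f" and fin: "finite E"
    and z: "\<And>x. x \<notin> E \<Longrightarrow> f x = 0"
  shows "f x = 0"
proof -
  obtain p where p: "\<And>x. f x = poly p x" using pf unfolding polyfun_def by blast
  show ?thesis
  proof (cases "p = 0")
    case True then show ?thesis using p by simp
  next
    case False
    have "UNIV \<subseteq> E \<union> {x. poly p x = 0}" using z p by auto
    moreover have "finite (E \<union> {x. poly p x = 0})" using fin poly_roots_finite[OF False] by simp
    ultimately have "finite (UNIV :: 'a set)" by (rule finite_subset)
    then show ?thesis using inf by simp
  qed
qed

lemma inf_univ:
  fixes q :: "'a::field"
  assumes q0: "q \<noteq> 0" and hq: "\<And>i::nat. i \<ge> 1 \<Longrightarrow> q ^ i \<noteq> 1"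
  shows "infinite (UNIV :: 'a set)"
proof
  assume fin: "finite (UNIV :: 'a set)"
  have "inj (\<lambda>i::nat. q^i)"
  proof (rule injI)
    have key: "q^i \<noteq> q^j" if "i < j" for i j
    proof
      assume "q^i = q^j"
      have "j = i + (j - i)" using that by simp
      then have "q^j = q^i * q^(j-i)" by (metis power_add)
      then have "q^i * 1 = q^i * q^(j-i)" using \<open>q^i = q^j\<close> by simp
      then have "q^(j-i) = 1" using q0 by simp
      then show False using hq[of "j-i"] that by simp
    qed
    fix i j :: nat assume "q^i = q^j"
    then show "i = j" using key[of i j] key[of j i] by (metis linorder_neqE_nat)
  qed
  moreover have "finite (range (\<lambda>i::nat. q^i))" using fin by (rule finite_subset[rotated]) simp
  ultimately have "finite (UNIV :: nat set)" using finite_imageD by blast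
  then show False by simp
qed

lemma main:
  fixes q k :: "'a::field"
  assumes q0: "q \<noteq> 0" and hq: "\<And>i::nat. i \<ge> 1 \<Longrightarrow> q ^ i \<noteq> 1"
  shows "(\<Sum>j\<le>n. Tm q k n j) = be q k n"
proof (induction n arbitrary: k)
  case 0
  then show ?case by (simp add: Tm_def al_def be_def)
next
  case (Suc n)
  show ?case
  proof (cases "n = 0")
    case True then show ?thesis using base1[OF q0 hq] by simp
  next
    case False
    then have n1: "1 \<le> n" by simp
    define c where "c = q^(2*n) - q^n"
    have c0: "c \<noteq> 0"
    proof
      assume "c = 0"
      then have "q^n * (q^n - 1) = 0" by (simp add: c_def power_mult mult.commute[of 2] power2_eq_square algebra_simps)
      then show False using q0 hq[OF n1] by simp
    qed
    define E where "E = {x::'a. 1 - x*q^n + x*q^(2*n) = 0}"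
    have "E \<subseteq> {-1/c}"
    proof
      fix x assume "x \<in> E"
      then have "1 + x*c = 0" by (simp add: E_def c_def algebra_simps)
      then show "x \<in> {-1/c}" using c0 by (simp add: field_simps) (metis add_eq_0_iff mult.commute)
    qed
    then have finE: "finite E" by (rule finite_subset) simp
    have bS: "be q k (Suc n) = (-1)^(Suc n)*(1 - k*q^(Suc n) + k*q^(2*(Suc n)))*qpoch k q (Suc n)
        /(q^(tri (Suc n))*qpoch q q (Suc n))" for k
      unfolding be_def by (rule if_not_P) simp
    have pf: "polyfun (\<lambda>k. (\<Sum>j\<le>Suc n. Tm q k (Suc n) j) - be q k (Suc n))"
      unfolding Tm_def bS
      by (intro pf_diff pf_sum pf_mult pf_div pf_qpoch pf_const pf_add pf_id finite_atMost)
    have "(\<Sum>j\<le>Suc n. Tm q x (Suc n) j) - be q x (Suc n) = 0" if "x \<notin> E" for x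
    proof -
      have "Dn q x n \<noteq> 0"
      proof -
        have "1 - x*q^n + x*q^(2*n) \<noteq> 0" using that by (simp add: E_def)
        moreover have "1 - q^(n+1) \<noteq> 0" using hq[of "n+1"] by simp
        ultimately show ?thesis using q0 by (simp add: Dn_def)
      qed
      moreover have "Dn q x n * (\<Sum>j\<le>Suc n. Tm q x (Suc n) j) = Dn q x n * be q x (Suc n)"
        using tele[OF q0 hq n1] Suc.IH[of x] be_rec[OF q0 hq n1] by simp
      ultimately show ?thesis by simp
    qed
    from pf_zero[OF inf_univ[OF q0 hq] pf finE this]
    show ?thesis by simp
  qed
qed

lemma tri2: "2 * tri n = n^2 + 3*n"
  by (induction n) (simp_all add: power2_eq_square algebra_simps)

theorem mainTheorem7:
  fixes q k :: "'a::field"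
  assumes "q \<noteq> 0"
    and "\<And>i::nat. i \<ge> 1 \<Longrightarrow> q ^ i \<noteq> 1"
  shows "WP_Bailey_pair 1 k q
     (\<lambda>n. if n = 0 then 1
          else (-1) ^ n * (q powi (- ((int n ^ 2 + 3 * int n) div 2))
                           + q powi ((3 * int n - int n ^ 2) div 2)))
     (\<lambda>n. if n = 0 then 1
          else ((-1) ^ n * (1 - k * q ^ n + k * q ^ (2 * n)) * qpoch k q n)
               / (q ^ ((n ^ 2 + 3 * n) div 2) * qpoch q q n))"
proof -
  have q0: "q \<noteq> 0" by fact
  have alpha: "(if n = 0 then 1
          else (-1) ^ n * (q powi (- ((int n ^ 2 + 3 * int n) div 2))
                           + q powi ((3 * int n - int n ^ 2) div 2))) = al q n" for n
  proof (cases "n = 0")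
    case True then show ?thesis by (simp add: al_def)
  next
    case False
    have t: "int n ^ 2 + 3 * int n = 2 * int (tri n)" using tri2[of n]
      by (metis of_nat_add of_nat_mult of_nat_numeral of_nat_power)
    have h1: "(int n ^ 2 + 3 * int n) div 2 = int (tri n)" unfolding t by simp
    have h2: "(3 * int n - int n ^ 2) div 2 = int (3*n) + - int (tri n)"
    proof -
      have "3 * int n - int n ^ 2 = 2 * (int (3*n) + - int (tri n))" using t by simp
      then show ?thesis by simp
    qed
    have p1: "q powi (- int (tri n)) = inverse (q ^ tri n)" by (simp add: power_int_minus)
    have p2: "q powi (int (3*n) + - int (tri n)) = q^(3*n) * inverse (q ^ tri n)"
    proof -
      have "q powi (int (3*n) + - int (tri n)) = q powi (int (3*n)) * q powi (- int (tri n))"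
        using q0 by (rule power_int_add[OF disjI1])
      then show ?thesis by (simp only: power_int_of_nat power_int_minus)
    qed
    show ?thesis unfolding h1 h2 p1 p2 using False q0
      by (simp add: al_def Aq_def field_simps)
  qed
  have beta: "(if n = 0 then 1
          else ((-1) ^ n * (1 - k * q ^ n + k * q ^ (2 * n)) * qpoch k q n)
               / (q ^ ((n ^ 2 + 3 * n) div 2) * qpoch q q n)) = be q k n" for n
  proof -
    have "(n ^ 2 + 3 * n) div 2 = tri n" using tri2[of n] by simp
    then show ?thesis by (simp add: be_def)
  qed
  have A: "(\<lambda>n. if n = 0 then 1
          else (-1) ^ n * (q powi (- ((int n ^ 2 + 3 * int n) div 2))
                           + q powi ((3 * int n - int n ^ 2) div 2))) = al q"
    by (rule ext) (rule alpha)
  have B: "(\<lambda>n. if n = 0 then 1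
          else ((-1) ^ n * (1 - k * q ^ n + k * q ^ (2 * n)) * qpoch k q n)
               / (q ^ ((n ^ 2 + 3 * n) div 2) * qpoch q q n)) = be q k"
    by (rule ext) (rule beta)
  show ?thesis unfolding A B WP_Bailey_pair_def
    using main[OF assms] by (simp add: Tm_def al_def)
qed

end
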